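(* Let $n\ge 1$ and let $\underline x=(a_1,\ldots,a_m)$ and $\underline y=(b_1,\ldots,b_t)$ be compositions of $n$. Then the meander $M(\underline x\mid\underline y)$ is a single path (i.e. it is connected, has no cycles, and is a path through all $n$ vertices) if and only if the meander permutation $\sigma_{\underline x,\underline y}$ is an $n$-cycle in the symmetric group $S_n$.
   Context: A composition of $n$ is a sequence $(a_1,\ldots,a_m)$ of nonnegative integers with $\sum a_i=n$. The meander $M(\underline x\mid\underline y)$ is the graph on vertices $1,2,\ldots,n$ (placed in order on a horizontal line) with the following edges. Top edges: for each part $a_k$ of $\underline x$, with $s=a_1+\cdots+a_{k-1}$, join $s+j$ to $s+a_k+1-j$ for $1\le j\le\lfloor a_k/2\rfloor$ (drawn as arcs above the line). Bottom edges: the same construction using the parts $b_k$ of $\underline y$ (drawn as arcs below the line). The modified meander $M'(\underline x\mid\underline y)$ is obtained from $M(\underline x\mid\underline y)$ by adding, for each odd $a_k$, a top loop at vertex $a_1+\cdots+a_{k-1}+\lceil a_k/2\rceil$, and for each odd $b_k$, a bottom loop at vertex $b_1+\cdots+b_{k-1}+\lceil b_k/2\rceil$; thus every vertex of $M'$ is incident with exactly one top edge or top loop and exactly one bottom edge or bottom loop. The top bijection $t$ of $\{1,\ldots,n\}$ sends $i$ to the other endpoint of the top edge at $i$, and $t(i)=i$ if $i$ carries a top loop; the bottom bijection $b$ is defined analogously with bottom edges/loops. The meander permutation is $\sigma_{\underline x,\underline y}=t\circ b\in S_n$, i.e. $\sigma_{\underline x,\underline y}(i)=t(b(i))$. *)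

theory Defs
  imports "HOL-Combinatorics.Cycles"
begin

definition is_composition :: "nat \<Rightarrow> nat list \<Rightarrow> bool" where
  "is_composition n xs \<longleftrightarrow> sum_list xs = n"

definition comp_edges :: "nat list \<Rightarrow> nat set set" where
  "comp_edges xs = {{s + j, s + a + 1 - j} | k s a j.
      k < length xs \<and> s = sum_list (take k xs) \<and> a = xs ! k \<and> 1 \<le> j \<and> j \<le> a div 2}"

definition arc_bij :: "nat list \<Rightarrow> nat \<Rightarrow> nat" where
  "arc_bij xs i = (if \<exists>j. j \<noteq> i \<and> {i, j} \<in> comp_edges xs
                   then (THE j. j \<noteq> i \<and> {i, j} \<in> comp_edges xs) else i)"

definition meander_perm :: "nat list \<Rightarrow> nat list \<Rightarrow> nat \<Rightarrow> nat" where
  "meander_perm xs ys = arc_bij xs \<circ> arc_bij ys"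

text \<open>Edges of the meander M(x|y) as a multigraph: top edges tagged True, bottom edges
  tagged False (so a top and a bottom arc between the same vertices are two edges).\<close>
definition meander_edges :: "nat list \<Rightarrow> nat list \<Rightarrow> (bool \<times> nat set) set" where
  "meander_edges xs ys = {(True, e) | e. e \<in> comp_edges xs} \<union> {(False, e) | e. e \<in> comp_edges ys}"

definition meander_is_path :: "nat \<Rightarrow> nat list \<Rightarrow> nat list \<Rightarrow> bool" where
  "meander_is_path n xs ys \<longleftrightarrow>
     (\<exists>vs. distinct vs \<and> set vs = {1..n} \<and>
        card (meander_edges xs ys) = n - 1 \<and>
        (\<forall>(l, e) \<in> meander_edges xs ys. \<exists>i. i + 1 < n \<and> e = {vs ! i, vs ! (i + 1)}) \<and>
        (\<forall>i. i + 1 < n \<longrightarrow> (\<exists>l. (l, {vs ! i, vs ! (i + 1)}) \<in> meander_edges xs ys)))"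

definition is_n_cycle :: "nat \<Rightarrow> (nat \<Rightarrow> nat) \<Rightarrow> bool" where
  "is_n_cycle n \<sigma> \<longleftrightarrow> (\<exists>cs. distinct cs \<and> set cs = {1..n} \<and> \<sigma> = cycle_of_list cs)"

end

theory Submission
  imports Defs
begin


definition Rf :: "nat \<Rightarrow> nat \<Rightarrow> nat" where
  "Rf n i = (if even i then (if i+1<n then i+1 else i) else i-1)"
definition Sf :: "nat \<Rightarrow> nat \<Rightarrow> nat" where
  "Sf n i = (if i=0 then 0 else if odd i then (if i+1<n then i+1 else i) else i-1)"
definition ff :: "nat \<Rightarrow> nat \<Rightarrow> nat" where
  "ff n k = (if k=0 then 0 else if k \<le> n div 2 then 2*k-1 else 2*(n-k))"

lemma Rf_lt: "i < n \<Longrightarrow> Rf n i < n" unfolding Rf_def by (simp; linarith)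
lemma Sf_lt: "i < n \<Longrightarrow> Sf n i < n" unfolding Sf_def by (simp; linarith)
lemma ff_lt: "k < n \<Longrightarrow> ff n k < n" unfolding ff_def by (simp; linarith)
lemma ff_inj: "k < n \<Longrightarrow> k' < n \<Longrightarrow> ff n k = ff n k' \<Longrightarrow> k = k'"
  unfolding ff_def by (simp split: if_splits; presburger)
lemma RSff: assumes "k < n" shows "Rf n (Sf n (ff n k)) = ff n (Suc k mod n)"
proof -
  define q where "q = n div 2"
  have q: "n = 2*q \<or> n = 2*q+1" unfolding q_def by presburger
  then have nd: "n div 2 = q" by auto
  have m: "Suc k mod n = (if Suc k < n then Suc k else 0)"
  proof (cases "Suc k < n")
    case False then have "Suc k = n" using assms by simp
    then show ?thesis by simp
  qed simp
  consider "k=0" | "0<k" "k<q" | "k = q" "0<k" | "q<k" "k+1<n" | "k+1=n" "q<k"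
    using assms q by linarith
  then show ?thesis
  proof cases
    case 1 thus ?thesis using q assms by (cases "n=1") (auto simp: ff_def Rf_def Sf_def nd m)
  next
    case 2
    have o: "odd (2*k-1)" using 2 by presburger
    have e: "even (2*k)" by simp
    show ?thesis using 2 q assms o e by (auto simp: ff_def Rf_def Sf_def nd m)
  next
    case 3
    have o: "odd (2*k-1)" using 3 by presburger
    show ?thesis
    proof (cases "Suc k < n")
      case True
      then have mm: "Suc k mod n = Suc k" by simp
      have o2: "even (2*k-2)" by presburger
      show ?thesis using 3 q assms o o2 True unfolding mm by (auto simp: ff_def Rf_def Sf_def nd)
    next
      case False
      then have "n = 2" "k = 1" using 3 q assms by auto
      then show ?thesis by (simp add: ff_def Rf_def Sf_def)
    qed
  next
    case 4
    have e: "even (2*(n-k))" by simp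
    have o: "odd (2*(n-k)-1)" using 4 by presburger
    show ?thesis using 4 q assms o e by (auto simp: ff_def Rf_def Sf_def nd m)
  next
    case 5
    have e: "even (2*(n-k))" by simp
    have o: "odd (2*(n-k)-1)" using 5 by presburger
    show ?thesis using 5 q assms o e by (auto simp: ff_def Rf_def Sf_def nd m)
  qed
qed
definition caseA :: "nat \<Rightarrow> (nat \<Rightarrow> nat) \<Rightarrow> (nat \<Rightarrow> nat) \<Rightarrow> nat list \<Rightarrow> bool" where
  "caseA n P Q vs \<longleftrightarrow> (\<forall>i<n. P (vs!i) = vs!(Rf n i) \<and> Q (vs!i) = vs!(Sf n i))"

lemma cycle_nth:
  assumes "distinct cs" "k < length cs"
  shows "cycle_of_list cs (cs!k) = cs!(Suc k mod length cs)"
proof -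
  have "map (cycle_of_list cs) cs = rotate 1 cs" using cyclic_rotation[OF assms(1), of 1] by simp
  hence "(map (cycle_of_list cs) cs) ! k = rotate1 cs ! k" by simp
  thus ?thesis using assms(2) by (simp add: nth_rotate1)
qed

lemma ff_image: "ff n ` {0..<n} = {0..<n}"
proof (rule endo_inj_surj)
  show "ff n ` {0..<n} \<subseteq> {0..<n}" using ff_lt by auto
  show "inj_on (ff n) {0..<n}" using ff_inj by (simp add: inj_on_def)
qed simp

lemma caseA_cycle:
  assumes cA: "caseA n P Q vs" and d: "distinct vs" and l: "length vs = n"
    and P: "\<And>x. x \<notin> set vs \<Longrightarrow> P x = x" and Q: "\<And>x. x \<notin> set vs \<Longrightarrow> Q x = x"
  shows "\<exists>cs. distinct cs \<and> set cs = set vs \<and> P \<circ> Q = cycle_of_list cs"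
proof -
  define cs where "cs = map (\<lambda>k. vs!(ff n k)) [0..<n]"
  have lcs: "length cs = n" by (simp add: cs_def)
  have inj: "inj_on (\<lambda>k. vs!(ff n k)) {0..<n}"
  proof (rule inj_onI)
    fix a b assume ab: "a \<in> {0..<n}" "b \<in> {0..<n}" "vs!(ff n a) = vs!(ff n b)"
    then have "ff n a = ff n b" using d l ff_lt by (simp add: nth_eq_iff_index_eq)
    then show "a = b" using ff_inj ab by simp
  qed
  have dcs: "distinct cs" unfolding cs_def using inj by (simp add: distinct_map)
  have scs: "set cs = set vs"
  proof -
    have "set cs = (\<lambda>k. vs!(ff n k)) ` {0..<n}" unfolding cs_def by simp
    also have "\<dots> = (\<lambda>i. vs!i) ` (ff n ` {0..<n})" by (simp add: image_image)
    also have "\<dots> = (\<lambda>i. vs!i) ` {0..<n}" by (simp only: ff_image)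
    also have "\<dots> = set vs" using l by (auto simp: in_set_conv_nth)
    finally show ?thesis .
  qed
  have "P \<circ> Q = cycle_of_list cs"
  proof
    fix x
    show "(P \<circ> Q) x = cycle_of_list cs x"
    proof (cases "x \<in> set vs")
      case True
      then obtain i where i: "i < n" "x = vs!i" using l by (auto simp: in_set_conv_nth)
      have "i \<in> ff n ` {0..<n}" using i(1) ff_image by simp
      then obtain k where k: "k < n" "i = ff n k" by auto
      have xc: "x = cs!k" using i k by (simp add: cs_def)
      have "cycle_of_list cs x = cs!(Suc k mod n)" using cycle_nth[OF dcs, of k] xc lcs k by simp
      also have "\<dots> = vs!(ff n (Suc k mod n))" using k(1) by (simp add: cs_def)
      also have "\<dots> = vs!(Rf n (Sf n i))" using RSff[OF k(1)] k by simp
      also have "\<dots> = P (Q x)" using cA i Sf_lt[OF i(1)] unfolding caseA_def by simp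
      finally show ?thesis by simp
    next
      case False
      then show ?thesis using P Q scs id_outside_supp[of x cs] by simp
    qed
  qed
  then show ?thesis using dcs scs by blast
qed
definition fnn :: "bool \<Rightarrow> (nat\<Rightarrow>nat) \<Rightarrow> (nat\<Rightarrow>nat) \<Rightarrow> nat \<Rightarrow> nat" where
  "fnn l P Q = (if l then P else Q)"
definition Edg :: "nat \<Rightarrow> (nat\<Rightarrow>nat) \<Rightarrow> (nat\<Rightarrow>nat) \<Rightarrow> (bool \<times> nat set) set" where
  "Edg n P Q = {(l, {x, fnn l P Q x}) | l x. x \<in> {1..n} \<and> fnn l P Q x \<noteq> x}"
definition pathE :: "nat \<Rightarrow> (bool \<times> nat set) set \<Rightarrow> bool" where
  "pathE n E \<longleftrightarrow> (\<exists>vs. distinct vs \<and> set vs = {1..n} \<and>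
        card E = n - 1 \<and>
        (\<forall>(l, e) \<in> E. \<exists>i. i + 1 < n \<and> e = {vs ! i, vs ! (i + 1)}) \<and>
        (\<forall>i. i + 1 < n \<longrightarrow> (\<exists>l. (l, {vs ! i, vs ! (i + 1)}) \<in> E)))"

lemma pair_inj:
  assumes "distinct vs" "Suc i < length vs" "Suc j < length vs"
    "{vs!i, vs!Suc i} = {vs!j, vs!Suc j}"
  shows "i = j"
proof -
  have "vs!i = vs!j \<or> (vs!i = vs!Suc j \<and> vs!Suc i = vs!j)" using assms(4) by (auto simp: doubleton_eq_iff)
  then show ?thesis using assms(1-3) by (auto simp: nth_eq_iff_index_eq)
qed

lemma caseA_path:
  assumes cA: "caseA n (fnn L P Q) (fnn (\<not>L) P Q) vs" and d: "distinct vs" and s: "set vs = {1..n}"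
  shows "pathE n (Edg n P Q)"
proof -
  have l: "length vs = n" using distinct_card[OF d] s by simp
  define F where "F l = fnn l P Q" for l
  have Fi: "F l (vs!i) = vs!(if l = L then Rf n i else Sf n i)" if "i < n" for l i
    using cA that unfolding caseA_def F_def by (cases "l = L") (auto simp: fnn_def)
  define \<phi> where "\<phi> i = (L = even i, {vs!i, vs!Suc i})" for i
  have memE: "(l, {x, F l x}) \<in> Edg n P Q" if "x \<in> {1..n}" "F l x \<noteq> x" for l x
    using that unfolding Edg_def F_def by blast
  have E: "Edg n P Q = \<phi> ` {0..<n-1}"
  proof
    show "Edg n P Q \<subseteq> \<phi> ` {0..<n-1}"
    proof
      fix z assume "z \<in> Edg n P Q"
      then obtain l x where z: "z = (l, {x, F l x})" "x \<in> {1..n}" "F l x \<noteq> x"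
        unfolding Edg_def F_def by blast
      then obtain i where i: "i < n" "x = vs!i" using s l by (metis in_set_conv_nth)
      show "z \<in> \<phi> ` {0..<n-1}"
      proof (cases "l = L")
        case True
        then have ne: "Rf n i \<noteq> i" and fx: "F l x = vs!(Rf n i)" using Fi[OF i(1), of l] z(3) i by auto
        show ?thesis
        proof (cases "even i")
          case True
          then have "Rf n i = Suc i" "Suc i < n" using ne by (auto simp: Rf_def split: if_splits)
          then have "z = \<phi> i" using z fx i True \<open>l = L\<close> by (simp add: \<phi>_def)
          moreover have "i \<in> {0..<n-1}" using \<open>Suc i < n\<close> by simp
          ultimately show ?thesis by blast
        next
          case False
          then have "Rf n i = i - 1" "i > 0" using ne by (auto simp: Rf_def)
          moreover have "even (i-1)" using False \<open>i>0\<close> by simp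
          moreover have "Suc (i - 1) = i" using \<open>i>0\<close> by simp
          ultimately have "z = \<phi> (i-1)" using z fx i \<open>l = L\<close> by (simp add: \<phi>_def insert_commute)
          moreover have "i - 1 \<in> {0..<n-1}" using \<open>i > 0\<close> i by simp
          ultimately show ?thesis by blast
        qed
      next
        case False
        then have ne: "Sf n i \<noteq> i" and fx: "F l x = vs!(Sf n i)" using Fi[OF i(1), of l] z(3) i by auto
        have lL: "l = (\<not>L)" using False by simp
        show ?thesis
        proof (cases "odd i")
          case True
          then have "Sf n i = Suc i" "Suc i < n" using ne by (auto simp: Sf_def split: if_splits)
          then have "z = \<phi> i" using z fx i True lL by (simp add: \<phi>_def)
          moreover have "i \<in> {0..<n-1}" using \<open>Suc i < n\<close> by simp
          ultimately show ?thesis by blast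
        next
          case o: False
          then have "Sf n i = i - 1" "i > 0" using ne by (auto simp: Sf_def split: if_splits)
          moreover have "odd (i-1)" using o \<open>i>0\<close> by simp
          moreover have "Suc (i - 1) = i" using \<open>i>0\<close> by simp
          ultimately have "z = \<phi> (i-1)" using z fx i lL by (simp add: \<phi>_def insert_commute)
          moreover have "i - 1 \<in> {0..<n-1}" using \<open>i > 0\<close> i by simp
          ultimately show ?thesis by blast
        qed
      qed
    qed
  next
    show "\<phi> ` {0..<n-1} \<subseteq> Edg n P Q"
    proof
      fix z assume "z \<in> \<phi> ` {0..<n-1}"
      then obtain p where p: "p < n - 1" "z = \<phi> p" by auto
      define l where "l = (L = even p)"
      have Fp: "F l (vs!p) = vs!Suc p" using Fi[of p l] p(1)
        by (auto simp: l_def Rf_def Sf_def)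
      have ne: "vs!Suc p \<noteq> vs!p" using d l p(1) by (simp add: nth_eq_iff_index_eq)
      have vp: "vs!p \<in> {1..n}"
      proof -
        have "p < length vs" using l p(1) by simp
        then have "vs!p \<in> set vs" by (rule nth_mem)
        then show ?thesis using s by simp
      qed
      have "z = (l, {vs!p, F l (vs!p)})" using p(2) Fp by (simp add: \<phi>_def l_def)
      moreover have "(l, {vs!p, F l (vs!p)}) \<in> Edg n P Q" using memE[OF vp, of l] Fp ne by simp
      ultimately show "z \<in> Edg n P Q" by simp
    qed
  qed
  have inj: "inj_on \<phi> {0..<n-1}"
  proof (rule inj_onI)
    fix a b assume ab: "a \<in> {0..<n-1}" "b \<in> {0..<n-1}" "\<phi> a = \<phi> b"
    then have "{vs!a, vs!Suc a} = {vs!b, vs!Suc b}" by (simp add: \<phi>_def)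
    then show "a = b" using pair_inj[OF d] ab l by simp
  qed
  have card: "card (Edg n P Q) = n - 1" unfolding E using card_image[OF inj] by simp
  have c1: "\<forall>(l, e) \<in> Edg n P Q. \<exists>i. i + 1 < n \<and> e = {vs ! i, vs ! (i + 1)}"
  proof (unfold E, rule ballI)
    fix z assume "z \<in> \<phi> ` {0..<n-1}"
    then obtain p where p: "p < n - 1" "z = \<phi> p" by auto
    have "p + 1 < n \<and> snd z = {vs ! p, vs ! (p + 1)}" using p by (simp add: \<phi>_def)
    then show "case z of (l, e) \<Rightarrow> \<exists>i. i + 1 < n \<and> e = {vs ! i, vs ! (i + 1)}"
      by (cases z) auto
  qed
  have c2: "\<forall>i. i + 1 < n \<longrightarrow> (\<exists>l. (l, {vs ! i, vs ! (i + 1)}) \<in> Edg n P Q)"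
  proof (intro allI impI)
    fix i assume i: "i + 1 < n"
    have "\<phi> i \<in> \<phi> ` {0..<n-1}" using i by simp
    then have "(L = even i, {vs ! i, vs ! (i + 1)}) \<in> Edg n P Q" unfolding E by (simp add: \<phi>_def)
    then show "\<exists>l. (l, {vs ! i, vs ! (i + 1)}) \<in> Edg n P Q" by blast
  qed
  show ?thesis unfolding pathE_def using d s card c1 c2 by blast
qed

lemma path_caseA:
  assumes p: "pathE n (Edg n P Q)" and PP: "\<And>x. P (P x) = x" and QQ: "\<And>x. Q (Q x) = x"
  shows "\<exists>vs L. distinct vs \<and> set vs = {1..n} \<and> caseA n (fnn L P Q) (fnn (\<not>L) P Q) vs"
proof -
  define E where "E = Edg n P Q"
  define F where "F l = fnn l P Q" for l
  have FF: "F l (F l x) = x" for l x using PP QQ by (simp add: F_def fnn_def)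
  obtain vs where d: "distinct vs" and s: "set vs = {1..n}" and cE: "card E = n - 1"
    and cov: "\<forall>i. i + 1 < n \<longrightarrow> (\<exists>l. (l, {vs ! i, vs ! (i + 1)}) \<in> E)"
    using p unfolding pathE_def E_def by blast
  have l: "length vs = n" using distinct_card[OF d] s by simp
  have finE: "finite E"
  proof -
    have "E \<subseteq> (\<lambda>(l,x). (l, {x, F l x})) ` (UNIV \<times> {1..n})"
      unfolding E_def Edg_def F_def by auto
    moreover have "finite ((\<lambda>(l,x). (l, {x, F l x})) ` ((UNIV::bool set) \<times> {1..n}))" by simp
    ultimately show ?thesis by (rule finite_subset)
  qed
  define pr where "pr i = {vs!i, vs!Suc i}" for i
  obtain lt where lt: "\<And>i. i + 1 < n \<Longrightarrow> (lt i, pr i) \<in> E"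
    using cov unfolding pr_def by (metis Suc_eq_plus1)
  define \<phi> where "\<phi> i = (lt i, pr i)" for i
  have inj: "inj_on \<phi> {0..<n-1}"
    using pair_inj[OF d] l by (auto simp: inj_on_def \<phi>_def pr_def)
  have sub: "\<phi> ` {0..<n-1} \<subseteq> E" using lt by (auto simp: \<phi>_def)
  have Eeq: "\<phi> ` {0..<n-1} = E"
    by (rule card_subset_eq[OF finE sub]) (use card_image[OF inj] cE in simp)
  have edge_at: "\<exists>j. j + 1 < n \<and> lt j = l \<and> (i = j \<or> i = Suc j)"
    if i: "i < n" and ne: "F l (vs!i) \<noteq> vs!i" for i l
  proof -
    have "vs!i \<in> {1..n}" using i l s nth_mem by (metis)
    then have "(l, {vs!i, F l (vs!i)}) \<in> E" using ne unfolding E_def Edg_def F_def by blast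
    then obtain j where j: "j < n - 1" "(l, {vs!i, F l (vs!i)}) = \<phi> j" using Eeq by force
    then have "lt j = l" "vs!i \<in> pr j" by (auto simp: \<phi>_def)
    then have "vs!i = vs!j \<or> vs!i = vs!Suc j" by (auto simp: pr_def)
    then have "i = j \<or> i = Suc j" using d l i j(1) by (auto simp: nth_eq_iff_index_eq)
    moreover have "j + 1 < n" using j(1) by simp
    ultimately show ?thesis using \<open>lt j = l\<close> by blast
  qed
  have swap: "F (lt i) (vs!i) = vs!Suc i \<and> F (lt i) (vs!Suc i) = vs!i" if i: "i + 1 < n" for i
  proof -
    have "(lt i, pr i) \<in> E" using lt i by simp
    then obtain y where y: "pr i = {y, F (lt i) y}" "F (lt i) y \<noteq> y"
      unfolding E_def Edg_def F_def by auto
    have "(y = vs!i \<and> F (lt i) y = vs!Suc i) \<or> (y = vs!Suc i \<and> F (lt i) y = vs!i)"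
      using y unfolding pr_def by (auto simp: doubleton_eq_iff)
    then show ?thesis using FF by metis
  qed
  have alt: "lt (Suc i) \<noteq> lt i" if i: "i + 2 < n" for i
  proof
    assume eq: "lt (Suc i) = lt i"
    have "F (lt i) (vs!Suc i) = vs!i" using swap[of i] i by simp
    moreover have "F (lt i) (vs!Suc i) = vs!Suc (Suc i)" using swap[of "Suc i"] i eq by simp
    ultimately have "vs!i = vs!Suc (Suc i)" by simp
    then show False using d l i by (simp add: nth_eq_iff_index_eq)
  qed
  define L where "L = lt 0"
  have ltp: "i + 1 < n \<Longrightarrow> lt i = (if even i then L else \<not>L)" for i
  proof (induction i)
    case 0 then show ?case by (simp add: L_def)
  next
    case (Suc i)
    then have "lt i = (if even i then L else \<not>L)" by simp
    moreover have "lt (Suc i) \<noteq> lt i" using alt[of i] Suc.prems by simp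
    ultimately show ?case by auto
  qed
  have fix_lem: "F l (vs!i) = vs!i" if "i < n" "\<not>(\<exists>j. j + 1 < n \<and> lt j = l \<and> (i = j \<or> i = Suc j))" for i l
    using edge_at that by blast
  have cA: "caseA n (F L) (F (\<not>L)) vs"
    unfolding caseA_def
  proof (intro allI impI conjI)
    fix i assume i: "i < n"
    show "F L (vs!i) = vs!(Rf n i)"
    proof (cases "even i")
      case True
      show ?thesis
      proof (cases "i + 1 < n")
        case True
        then show ?thesis using swap[of i] ltp[of i] \<open>even i\<close> by (simp add: Rf_def)
      next
        case False
        have "F L (vs!i) = vs!i"
        proof (rule fix_lem[OF i], rule notI)
          assume "\<exists>j. j + 1 < n \<and> lt j = L \<and> (i = j \<or> i = Suc j)"
          then obtain j where "j + 1 < n" "lt j = L" "i = j \<or> i = Suc j" by blast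
          then show False using False \<open>even i\<close> ltp[of j] by auto
        qed
        then show ?thesis using False \<open>even i\<close> by (simp add: Rf_def)
      qed
    next
      case False
      then have "i > 0" by (cases i) auto
      have "even (i - 1)" using False \<open>i > 0\<close> by simp
      then have "lt (i - 1) = L" using ltp[of "i-1"] i \<open>i>0\<close> by simp
      moreover have "Suc (i - 1) = i" using \<open>i>0\<close> by simp
      ultimately show ?thesis using swap[of "i-1"] i False by (simp add: Rf_def)
    qed
    show "F (\<not>L) (vs!i) = vs!(Sf n i)"
    proof (cases "i = 0")
      case True
      have "F (\<not>L) (vs!i) = vs!i"
      proof (rule fix_lem[OF i], rule notI)
        assume "\<exists>j. j + 1 < n \<and> lt j = (\<not>L) \<and> (i = j \<or> i = Suc j)"
        then obtain j where "j + 1 < n" "lt j = (\<not>L)" "i = j \<or> i = Suc j" by blast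
        then show False using True ltp[of j] by auto
      qed
      then show ?thesis using True by (simp add: Sf_def)
    next
      case i0: False
      show ?thesis
      proof (cases "odd i")
        case True
        show ?thesis
        proof (cases "i + 1 < n")
          case True
          then show ?thesis using swap[of i] ltp[of i] \<open>odd i\<close> i0 by (simp add: Sf_def)
        next
          case False
          have "F (\<not>L) (vs!i) = vs!i"
          proof (rule fix_lem[OF i], rule notI)
            assume "\<exists>j. j + 1 < n \<and> lt j = (\<not>L) \<and> (i = j \<or> i = Suc j)"
            then obtain j where "j + 1 < n" "lt j = (\<not>L)" "i = j \<or> i = Suc j" by blast
            then show False using False \<open>odd i\<close> ltp[of j] by auto
          qed
          then show ?thesis using False \<open>odd i\<close> i0 by (simp add: Sf_def)
        qed
      next
        case False
        have "odd (i - 1)" using False i0 by simp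
        then have "lt (i - 1) = (\<not>L)" using ltp[of "i-1"] i i0 by simp
        moreover have "Suc (i - 1) = i" using i0 by simp
        ultimately show ?thesis using swap[of "i-1"] i False i0 by (simp add: Sf_def)
      qed
    qed
  qed
  then show ?thesis using d s unfolding F_def by blast
qed
definition gg :: "int \<Rightarrow> nat \<Rightarrow> int" where
  "gg m j = (if even j then m - int (j div 2) else m + int ((j+1) div 2))"

lemma gg_ev: "gg m (2*a) = m - int a" by (simp add: gg_def)
lemma gg_ev2: "gg m (Suc (Suc (2*a))) = m - int a - 1" by (simp add: gg_def)
lemma gg_od: "gg m (Suc (2*a)) = m + int a + 1" by (simp add: gg_def)

lemma nat_eo: fixes i :: nat obtains a where "i = 2*a" | a where "i = 2*a+1"
proof (cases "even i")
  case True then obtain a where "i = 2*a" by (rule evenE)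
  then show ?thesis by (rule that(1))
next
  case False then obtain a where "i = 2*a+1" by (rule oddE)
  then show ?thesis by (rule that(2))
qed

lemma ggP: "i < n \<Longrightarrow> 2*m+1 - gg m i = gg m (Rf n i) \<or> 2*m+1 - gg m i = gg m (Rf n i) + int n"
proof (cases i rule: nat_eo)
  case (1 a)
  assume "i < n"
  show ?thesis
  proof (cases "i+1 < n")
    case True
    then have "Rf n i = 2*a+1" using 1 by (simp add: Rf_def)
    then show ?thesis using 1 by (simp add: gg_ev gg_od gg_ev2)
  next
    case False
    then have "Rf n i = 2*a" "n = 2*a+1" using 1 \<open>i<n\<close> by (auto simp: Rf_def)
    then show ?thesis using 1 by (simp add: gg_ev gg_od gg_ev2)
  qed
next
  case (2 a)
  then have "Rf n i = 2*a" by (simp add: Rf_def)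
  then show ?thesis using 2 by (simp add: gg_ev gg_od gg_ev2)
qed

lemma ggQ: "i < n \<Longrightarrow> 2*m - gg m i = gg m (Sf n i) \<or> 2*m - gg m i + int n = gg m (Sf n i)"
proof (cases i rule: nat_eo)
  case (1 a)
  assume "i < n"
  show ?thesis
  proof (cases "a = 0")
    case True
    then show ?thesis using 1 by (simp add: Sf_def gg_def)
  next
    case False
    then obtain b where b: "a = Suc b" by (cases a) auto
    then have "Sf n i = Suc (2*b)" using 1 by (simp add: Sf_def)
    then show ?thesis using 1 b by (simp add: gg_ev gg_od gg_ev2)
  qed
next
  case (2 a)
  assume "i < n"
  show ?thesis
  proof (cases "i+1 < n")
    case True
    then have "Sf n i = 2*(a+1)" using 2 by (simp add: Sf_def)
    then show ?thesis using 2 by (simp add: gg_ev gg_od gg_ev2)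
  next
    case False
    then have "Sf n i = 2*a+1" "n = 2*a+2" using 2 \<open>i<n\<close> by (auto simp: Sf_def)
    then show ?thesis using 2 by (simp add: gg_ev gg_od gg_ev2)
  qed
qed
lemma dvd_small: assumes "int n dvd x" "\<bar>x\<bar> < int n" shows "x = 0"
proof (rule ccontr)
  assume "x \<noteq> 0"
  then have "\<bar>int n\<bar> \<le> \<bar>x\<bar>" using dvd_imp_le_int[of x "int n"] assms(1) by blast
  then show False using assms(2) by simp
qed

lemma gg_inj: assumes "i < n" "j < n" "int n dvd (gg m i - gg m j)" shows "i = j"
proof -
  have key: "X = 0" if "gg m i - gg m j = X" "\<bar>X\<bar> < int n" for X
  proof -
    have "int n dvd X" using assms(3) that(1) by simp
    then show ?thesis using dvd_small that(2) by blast
  qed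
  show ?thesis
  proof (cases i rule: nat_eo)
    case (1 a)
    note ia = this
    show ?thesis
    proof (cases j rule: nat_eo)
      case (1 b)
      have "gg m i - gg m j = int b - int a" using 1 ia by (simp add: gg_ev)
      moreover have "\<bar>int b - int a\<bar> < int n" using assms(1,2) 1 ia by linarith
      ultimately have "int b - int a = 0" by (rule key)
      then show ?thesis using 1 ia by simp
    next
      case (2 b)
      have "gg m i - gg m j = - (int a + int b + 1)" using 2 ia by (simp add: gg_ev gg_od)
      moreover have "\<bar>- (int a + int b + 1)\<bar> < int n" using assms(1,2) 2 ia by linarith
      ultimately have "- (int a + int b + 1) = 0" by (rule key)
      then show ?thesis by simp
    qed
  next
    case (2 a)
    note ia = this
    show ?thesis
    proof (cases j rule: nat_eo)
      case (1 b)
      have "gg m i - gg m j = int a + int b + 1" using 1 ia by (simp add: gg_ev gg_od)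
      moreover have "\<bar>int a + int b + 1\<bar> < int n" using assms(1,2) 1 ia by linarith
      ultimately have "int a + int b + 1 = 0" by (rule key)
      then show ?thesis by simp
    next
      case (2 b)
      have "gg m i - gg m j = int a - int b" using 2 ia by (simp add: gg_od)
      moreover have "\<bar>int a - int b\<bar> < int n" using assms(1,2) 2 ia by linarith
      ultimately have "int a - int b = 0" by (rule key)
      then show ?thesis using 2 ia by simp
    qed
  qed
qed

lemma lemG:
  fixes h :: "int \<Rightarrow> nat"
  assumes hper: "\<And>a b. h a = h b \<longleftrightarrow> a mod int n = b mod int n"
    and hV: "\<And>a. h a \<in> {1..n}"
    and P: "\<And>k. P (h k) = h (2*m+1-k)" and Q: "\<And>k. Q (h k) = h (2*m - k)"
  shows "\<exists>vs. distinct vs \<and> set vs = {1..n} \<and> caseA n P Q vs"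
proof -
  define vs where "vs = map (\<lambda>j. h (gg m j)) [0..<n]"
  have shift: "h (a + int n) = h a" for a using hper by simp
  have inj: "inj_on (\<lambda>j. h (gg m j)) {0..<n}"
  proof (rule inj_onI)
    fix i j assume "i \<in> {0..<n}" "j \<in> {0..<n}" "h (gg m i) = h (gg m j)"
    then show "i = j" using hper gg_inj[of i n j m] by (simp add: mod_eq_dvd_iff)
  qed
  have d: "distinct vs" unfolding vs_def using inj by (simp add: distinct_map)
  have sub: "set vs \<subseteq> {1..n}" unfolding vs_def using hV by auto
  have s: "set vs = {1..n}"
    by (rule card_subset_eq[OF _ sub]) (use card_image[OF inj] in \<open>simp_all add: vs_def\<close>)
  have "caseA n P Q vs" unfolding caseA_def
  proof (intro allI impI conjI)
    fix i assume i: "i < n"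
    have vi: "vs!i = h (gg m i)" using i by (simp add: vs_def)
    have vR: "vs!(Rf n i) = h (gg m (Rf n i))" using Rf_lt[OF i] by (simp add: vs_def)
    have vS: "vs!(Sf n i) = h (gg m (Sf n i))" using Sf_lt[OF i] by (simp add: vs_def)
    show "P (vs!i) = vs!(Rf n i)"
    proof (cases "2*m+1 - gg m i = gg m (Rf n i)")
      case True then show ?thesis by (simp add: vi vR P)
    next
      case False then have "2*m+1 - gg m i = gg m (Rf n i) + int n" using ggP[OF i, of m] by blast
      then show ?thesis using shift by (simp add: vi vR P)
    qed
    show "Q (vs!i) = vs!(Sf n i)"
    proof (cases "2*m - gg m i = gg m (Sf n i)")
      case True then show ?thesis by (simp add: vi vS Q)
    next
      case False then have "gg m (Sf n i) = 2*m - gg m i + int n" using ggQ[OF i, of m] by simp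
      then show ?thesis using shift by (simp add: vi vS Q)
    qed
  qed
  then show ?thesis using d s by blast
qed


lemma abstract_fwd:
  assumes PP: "\<And>x. P (P x) = x" and QQ: "\<And>x. Q (Q x) = x"
    and Pin: "\<And>x. x \<in> {1..n} \<Longrightarrow> P x \<in> {1..n}"
    and Pout: "\<And>x. x \<notin> {1..n} \<Longrightarrow> P x = x" and Qout: "\<And>x. x \<notin> {1..n} \<Longrightarrow> Q x = x"
    and p: "pathE n (Edg n P Q)"
  shows "is_n_cycle n (P \<circ> Q)"
proof -
  obtain vs L where d: "distinct vs" and s: "set vs = {1..n}" and cA: "caseA n (fnn L P Q) (fnn (\<not>L) P Q) vs"
    using path_caseA[OF p PP QQ] by blast
  have l: "length vs = n" using distinct_card[OF d] s by simp
  obtain cs where cs: "distinct cs" "set cs = set vs" "fnn L P Q \<circ> fnn (\<not>L) P Q = cycle_of_list cs"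
  proof -
    have o1: "\<And>x. x \<notin> set vs \<Longrightarrow> fnn L P Q x = x" using Pout Qout s by (simp add: fnn_def)
    have o2: "\<And>x. x \<notin> set vs \<Longrightarrow> fnn (\<not>L) P Q x = x" using Pout Qout s by (simp add: fnn_def)
    show ?thesis using caseA_cycle[OF cA d l o1 o2] that by blast
  qed
  show ?thesis
  proof (cases L)
    case True
    then show ?thesis using cs s unfolding is_n_cycle_def by (auto simp: fnn_def)
  next
    case False
    then have QP: "Q \<circ> P = cycle_of_list cs" using cs by (simp add: fnn_def)
    have bP: "bij P" using PP by (rule involuntory_imp_bij)
    have iP: "inv P = P" by (rule inv_unique_comp) (auto simp: PP)
    have "P \<circ> Q = P \<circ> (Q \<circ> P) \<circ> inv P" unfolding iP by (auto simp: PP)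
    also have "\<dots> = cycle_of_list (map P cs)" unfolding QP by (rule conjugation_of_cycle[OF cs(1) bP])
    finally have e: "P \<circ> Q = cycle_of_list (map P cs)" .
    have d2: "distinct (map P cs)" using cs(1) inj_on_subset[OF bij_is_inj[OF bP]] by (simp add: distinct_map)
    have "set (map P cs) = P ` {1..n}" using cs(2) s by simp
    also have "\<dots> = {1..n}"
    proof
      show "P ` {1..n} \<subseteq> {1..n}" using Pin by auto
      show "{1..n} \<subseteq> P ` {1..n}"
      proof
        fix x assume "x \<in> {1..n}"
        then have "P x \<in> {1..n}" "x = P (P x)" using Pin PP by auto
        then show "x \<in> P ` {1..n}" by blast
      qed
    qed
    finally show ?thesis using d2 e unfolding is_n_cycle_def by blast
  qed
qed

lemma nat_mod_suc:
  assumes "n > 0" shows "nat ((k+1) mod int n) = Suc (nat (k mod int n)) mod n"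
proof -
  have "int (Suc (nat (k mod int n)) mod n) = (1 + k mod int n) mod int n"
    using assms by (simp add: of_nat_mod)
  also have "\<dots> = (1 + k) mod int n" by (rule mod_add_right_eq)
  also have "\<dots> = (k+1) mod int n" by (simp add: add.commute)
  finally show ?thesis by (metis nat_int)
qed

lemma abstract_bwd:
  assumes PP: "\<And>x. P (P x) = x" and QQ: "\<And>x. Q (Q x) = x" and n: "n \<ge> 1"
    and Pin: "\<And>x. x \<in> {1..n} \<Longrightarrow> P x \<in> {1..n}"
    and c: "is_n_cycle n (P \<circ> Q)"
  shows "pathE n (Edg n P Q)"
proof -
  obtain cs where d: "distinct cs" and s: "set cs = {1..n}" and e: "P \<circ> Q = cycle_of_list cs"
    using c unfolding is_n_cycle_def by blast
  have l: "length cs = n" using distinct_card[OF d] s by simp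
  define h where "h k = cs ! nat (k mod int n)" for k
  have hlt: "nat (k mod int n) < n" for k using n by (simp add: nat_less_iff)
  have hper: "h a = h b \<longleftrightarrow> a mod int n = b mod int n" for a b
  proof -
    have "h a = h b \<longleftrightarrow> nat (a mod int n) = nat (b mod int n)"
      unfolding h_def using d l hlt by (simp add: nth_eq_iff_index_eq)
    also have "\<dots> \<longleftrightarrow> a mod int n = b mod int n" using n by (simp add: eq_nat_nat_iff)
    finally show ?thesis .
  qed
  have hV: "h a \<in> {1..n}" for a
  proof -
    have "cs ! nat (a mod int n) \<in> set cs" using hlt[of a] l by simp
    then show ?thesis using s unfolding h_def by simp
  qed
  have hs: "P (Q (h k)) = h (k+1)" for k
  proof -
    have "P (Q (h k)) = cycle_of_list cs (cs ! nat (k mod int n))" using e unfolding h_def by (metis comp_apply)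
    also have "\<dots> = cs ! (Suc (nat (k mod int n)) mod n)" using cycle_nth[OF d] hlt l by simp
    also have "\<dots> = h (k+1)" unfolding h_def using nat_mod_suc n by simp
    finally show ?thesis .
  qed
  have injPQ: "a = b" if "P (Q a) = P (Q b)" for a b
  proof -
    have "P (P (Q a)) = P (P (Q b))" using that by simp
    then have "Q a = Q b" using PP by simp
    then have "Q (Q a) = Q (Q b)" by simp
    then show ?thesis using QQ by simp
  qed
  have "P (h 0) \<in> set cs" using Pin[OF hV[of 0]] s by simp
  then obtain j where j: "j < n" "P (h 0) = cs ! j" using l by (auto simp: in_set_conv_nth)
  define c where "c = int j"
  have hj: "h c = cs ! j" unfolding h_def c_def using j(1) by simp
  have Qstep: "Q (h k) = h (c - 1 - k)" if "P (h k) = h (c - k)" for k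
  proof -
    have "P (Q (Q (h k))) = h (c - k)" using that QQ by simp
    also have "\<dots> = P (Q (h (c - 1 - k)))" using hs[of "c - 1 - k"] by simp
    finally show ?thesis using injPQ by blast
  qed
  have Pnat: "P (h (int k)) = h (c - int k)" for k
  proof (induction k)
    case 0 then show ?case using j hj by simp
  next
    case (Suc k)
    have "int (Suc k) = int k + 1" by simp
    then have "P (h (int (Suc k))) = P (P (Q (h (int k))))" using hs[of "int k"] by metis
    also have "\<dots> = Q (h (int k))" using PP by simp
    also have "\<dots> = h (c - 1 - int k)" using Qstep Suc.IH by blast
    finally show ?case by (simp add: algebra_simps)
  qed
  have Pk: "P (h k) = h (c - k)" for k
  proof -
    have "h k = h (int (nat (k mod int n)))" using hper n by simp
    moreover have "h (c - k) = h (c - int (nat (k mod int n)))"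
      using hper n by (simp add: mod_diff_right_eq)
    ultimately show ?thesis using Pnat[of "nat (k mod int n)"] by simp
  qed
  have Qk: "Q (h k) = h (c - 1 - k)" for k using Qstep Pk by blast
  show ?thesis
  proof (cases "even c")
    case False
    then obtain m where m: "c = 2*m+1" by (metis oddE)
    have "\<exists>vs. distinct vs \<and> set vs = {1..n} \<and> caseA n P Q vs"
    proof (rule lemG[OF hper hV])
      fix k
      show "P (h k) = h (2*m+1-k)" using Pk[of k] m by simp
      show "Q (h k) = h (2*m-k)" using Qk[of k] m by simp
    qed
    then obtain vs where "distinct vs" "set vs = {1..n}" "caseA n (fnn True P Q) (fnn (\<not>True) P Q) vs"
      by (auto simp: fnn_def)
    then show ?thesis using caseA_path by blast
  next
    case True
    then obtain m where m: "c = 2*m" by (metis evenE)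
    define h' where "h' k = h (-k)" for k
    have hper': "h' a = h' b \<longleftrightarrow> a mod int n = b mod int n" for a b
      unfolding h'_def hper by (simp add: mod_eq_dvd_iff dvd_diff_commute)
    have hV': "h' a \<in> {1..n}" for a unfolding h'_def by (rule hV)
    have "\<exists>vs. distinct vs \<and> set vs = {1..n} \<and> caseA n Q P vs"
    proof (rule lemG[OF hper' hV'])
      fix k
      have e1: "c - 1 - (-k) = - (2*(-m)+1-k)" using m by simp
      have e2: "c - (-k) = - (2*(-m)-k)" using m by simp
      show "Q (h' k) = h' (2*(-m)+1-k)" unfolding h'_def using Qk[of "-k"] e1 by (simp add: algebra_simps)
      show "P (h' k) = h' (2*(-m)-k)" unfolding h'_def using Pk[of "-k"] e2 by (simp add: algebra_simps)
    qed
    then obtain vs where "distinct vs" "set vs = {1..n}" "caseA n (fnn False P Q) (fnn (\<not>False) P Q) vs"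
      by (auto simp: fnn_def)
    then show ?thesis using caseA_path by blast
  qed
qed


lemma take_mono_sum: "k \<le> k' \<Longrightarrow> sum_list (take k (xs::nat list)) \<le> sum_list (take k' xs)"
proof -
  assume "k \<le> k'"
  then obtain d where "k' = k + d" using le_Suc_ex by blast
  then show ?thesis by (simp add: take_add)
qed

lemma block_end:
  assumes "k < length xs" "k < k'"
  shows "sum_list (take k (xs::nat list)) + xs!k \<le> sum_list (take k' xs)"
proof -
  have "sum_list (take (Suc k) xs) = sum_list (take k xs) + xs!k"
    using assms(1) by (simp add: take_Suc_conv_app_nth)
  moreover have "sum_list (take (Suc k) xs) \<le> sum_list (take k' xs)" using assms(2) by (intro take_mono_sum) simp
  ultimately show ?thesis by simp
qed

lemma block_le:
  assumes "k < length xs"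
  shows "sum_list (take k (xs::nat list)) + xs!k \<le> sum_list xs"
  using block_end[of k xs "length xs"] assms by simp

lemma block_unique:
  fixes xs :: "nat list"
  assumes "k < length xs" "k' < length xs"
    "sum_list (take k xs) < i" "i \<le> sum_list (take k xs) + xs!k"
    "sum_list (take k' xs) < i" "i \<le> sum_list (take k' xs) + xs!k'"
  shows "k = k'"
proof (rule ccontr)
  assume "k \<noteq> k'"
  then have "k < k' \<or> k' < k" by arith
  then show False
  proof
    assume "k < k'"
    then show False using block_end[OF assms(1), of k'] assms by simp
  next
    assume "k' < k"
    then show False using block_end[OF assms(2), of k] assms by simp
  qed
qed

lemma edge_form:
  assumes "e \<in> comp_edges xs"
  shows "\<exists>k p q. k < length xs \<and> e = {p, q} \<and> p \<noteq> q \<and>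
     sum_list (take k xs) < p \<and> p \<le> sum_list (take k xs) + xs!k \<and>
     sum_list (take k xs) < q \<and> q \<le> sum_list (take k xs) + xs!k \<and>
     p + q = 2 * sum_list (take k xs) + xs!k + 1"
proof -
  obtain k s a j where e: "e = {s + j, s + a + 1 - j}" "k < length xs" "s = sum_list (take k xs)"
    "a = xs ! k" "1 \<le> j" "j \<le> a div 2"
    using assms unfolding comp_edges_def by blast
  have ja: "2 * j \<le> a" using e(6) by linarith
  define p where "p = s + j"
  define q where "q = s + a + 1 - j"
  have f1: "p \<noteq> q" "s < p" "p \<le> s + a" "s < q" "q \<le> s + a" "p + q = 2 * s + a + 1"
    unfolding p_def q_def using ja e(5) by linarith+
  have "e = {p, q}" using e(1) unfolding p_def q_def .
  then show ?thesis using f1 e(2,3,4) by blast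
qed

lemma edge_in_range:
  assumes "e \<in> comp_edges xs" "x \<in> e"
  shows "x \<in> {1..sum_list xs}"
proof -
  obtain k p q where kpq: "k < length xs" "e = {p, q}"
     "sum_list (take k xs) < p" "p \<le> sum_list (take k xs) + xs!k"
     "sum_list (take k xs) < q" "q \<le> sum_list (take k xs) + xs!k"
    using edge_form[OF assms(1)] by blast
  have "sum_list (take k xs) + xs!k \<le> sum_list xs" using block_le[OF kpq(1)] .
  then show ?thesis using kpq assms(2) by auto
qed

lemma edge_proper: "{i, j} \<in> comp_edges xs \<Longrightarrow> i \<noteq> j"
  using edge_form[of "{i,j}" xs] by (auto simp: doubleton_eq_iff)

lemma edge_unique:
  assumes "{i, j} \<in> comp_edges xs" "{i, j'} \<in> comp_edges xs"
  shows "j = j'"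
proof -
  obtain k p q where A: "k < length xs" "{i,j} = {p, q}"
     "sum_list (take k xs) < p" "p \<le> sum_list (take k xs) + xs!k"
     "sum_list (take k xs) < q" "q \<le> sum_list (take k xs) + xs!k"
     "p + q = 2 * sum_list (take k xs) + xs!k + 1"
    using edge_form[OF assms(1)] by blast
  obtain k' p' q' where B: "k' < length xs" "{i,j'} = {p', q'}"
     "sum_list (take k' xs) < p'" "p' \<le> sum_list (take k' xs) + xs!k'"
     "sum_list (take k' xs) < q'" "q' \<le> sum_list (take k' xs) + xs!k'"
     "p' + q' = 2 * sum_list (take k' xs) + xs!k' + 1"
    using edge_form[OF assms(2)] by blast
  have iA: "sum_list (take k xs) < i \<and> i \<le> sum_list (take k xs) + xs!k" using A by (auto simp: doubleton_eq_iff)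
  have iB: "sum_list (take k' xs) < i \<and> i \<le> sum_list (take k' xs) + xs!k'" using B by (auto simp: doubleton_eq_iff)
  have "k = k'" using block_unique[OF A(1) B(1)] iA iB by blast
  moreover have "i + j = p + q" using A(2) by (auto simp: doubleton_eq_iff)
  moreover have "i + j' = p' + q'" using B(2) by (auto simp: doubleton_eq_iff)
  ultimately show ?thesis using A(7) B(7) by simp
qed

lemma arc_bij_eq: assumes "{i, j} \<in> comp_edges xs" shows "arc_bij xs i = j"
proof -
  have ij: "j \<noteq> i" using edge_proper[OF assms] by simp
  have ex: "\<exists>j. j \<noteq> i \<and> {i, j} \<in> comp_edges xs" using ij assms by blast
  have "(THE j'. j' \<noteq> i \<and> {i, j'} \<in> comp_edges xs) = j"
    by (rule the_equality) (use ij assms edge_unique in blast)+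
  then show ?thesis using ex unfolding arc_bij_def by simp
qed

lemma arc_bij_edge: assumes "arc_bij xs i \<noteq> i" shows "{i, arc_bij xs i} \<in> comp_edges xs"
proof -
  have "\<exists>j. j \<noteq> i \<and> {i, j} \<in> comp_edges xs"
  proof (rule ccontr)
    assume nex: "\<not> ?thesis"
    have "arc_bij xs i = i" unfolding arc_bij_def by (rule if_not_P[OF nex])
    then show False using assms by simp
  qed
  then obtain j where "j \<noteq> i" "{i, j} \<in> comp_edges xs" by blast
  then show ?thesis using arc_bij_eq by metis
qed

lemma arc_bij_inv: "arc_bij xs (arc_bij xs i) = i"
proof (cases "arc_bij xs i = i")
  case False
  then have "{arc_bij xs i, i} \<in> comp_edges xs" using arc_bij_edge by (metis insert_commute)
  then show ?thesis by (rule arc_bij_eq)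
qed simp

lemma arc_bij_in: assumes "i \<in> {1..sum_list xs}" shows "arc_bij xs i \<in> {1..sum_list xs}"
proof (cases "arc_bij xs i = i")
  case False
  then show ?thesis using arc_bij_edge[OF False] edge_in_range by blast
qed (use assms in simp)

lemma arc_bij_out: assumes "i \<notin> {1..sum_list xs}" shows "arc_bij xs i = i"
proof (rule ccontr)
  assume "arc_bij xs i \<noteq> i"
  then have "i \<in> {1..sum_list xs}" using arc_bij_edge edge_in_range by blast
  then show False using assms by simp
qed

lemma comp_edges_char:
  "comp_edges xs = {{x, arc_bij xs x} | x. x \<in> {1..sum_list xs} \<and> arc_bij xs x \<noteq> x}"
proof
  show "comp_edges xs \<subseteq> {{x, arc_bij xs x} | x. x \<in> {1..sum_list xs} \<and> arc_bij xs x \<noteq> x}"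
  proof
    fix e assume e: "e \<in> comp_edges xs"
    then obtain k p q where "e = {p, q}" "p \<noteq> q" using edge_form by blast
    moreover have "p \<in> {1..sum_list xs}" using e edge_in_range \<open>e = {p,q}\<close> by blast
    moreover have "arc_bij xs p = q" using arc_bij_eq e \<open>e = {p,q}\<close> by blast
    ultimately show "e \<in> {{x, arc_bij xs x} | x. x \<in> {1..sum_list xs} \<and> arc_bij xs x \<noteq> x}" by auto
  qed
next
  show "{{x, arc_bij xs x} | x. x \<in> {1..sum_list xs} \<and> arc_bij xs x \<noteq> x} \<subseteq> comp_edges xs"
    using arc_bij_edge by blast
qed

lemma Edg_mem: assumes "x \<in> {1..n}" "fnn l P Q x \<noteq> x" shows "(l, {x, fnn l P Q x}) \<in> Edg n P Q"
  unfolding Edg_def by (rule CollectI, rule exI[of _ l], rule exI[of _ x]) (use assms in simp)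

lemma meander_edges_Edg:
  assumes "sum_list xs = n" "sum_list ys = n"
  shows "meander_edges xs ys = Edg n (arc_bij xs) (arc_bij ys)"
proof -
  have cx: "comp_edges xs = {{x, arc_bij xs x} | x. x \<in> {1..n} \<and> arc_bij xs x \<noteq> x}"
    using comp_edges_char[of xs] assms by simp
  have cy: "comp_edges ys = {{x, arc_bij ys x} | x. x \<in> {1..n} \<and> arc_bij ys x \<noteq> x}"
    using comp_edges_char[of ys] assms by simp
  show ?thesis
  proof (intro equalityI subsetI)
    fix z assume "z \<in> meander_edges xs ys"
    then have "(\<exists>e. z = (True, e) \<and> e \<in> comp_edges xs) \<or> (\<exists>e. z = (False, e) \<and> e \<in> comp_edges ys)"
      unfolding meander_edges_def by blast
    then show "z \<in> Edg n (arc_bij xs) (arc_bij ys)"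
    proof
      assume "\<exists>e. z = (True, e) \<and> e \<in> comp_edges xs"
      then obtain e where "z = (True, e)" "e \<in> comp_edges xs" by blast
      then obtain x where x: "z = (True, {x, arc_bij xs x})" "x \<in> {1..n}" "arc_bij xs x \<noteq> x"
        unfolding cx by blast
      have "(True, {x, fnn True (arc_bij xs) (arc_bij ys) x}) \<in> Edg n (arc_bij xs) (arc_bij ys)"
        by (rule Edg_mem) (use x in \<open>simp_all add: fnn_def\<close>)
      then show ?thesis using x(1) by (simp add: fnn_def)
    next
      assume "\<exists>e. z = (False, e) \<and> e \<in> comp_edges ys"
      then obtain e where "z = (False, e)" "e \<in> comp_edges ys" by blast
      then obtain x where x: "z = (False, {x, arc_bij ys x})" "x \<in> {1..n}" "arc_bij ys x \<noteq> x"
        unfolding cy by blast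
      have "(False, {x, fnn False (arc_bij xs) (arc_bij ys) x}) \<in> Edg n (arc_bij xs) (arc_bij ys)"
        by (rule Edg_mem) (use x in \<open>simp_all add: fnn_def\<close>)
      then show ?thesis using x(1) by (simp add: fnn_def)
    qed
  next
    fix z assume "z \<in> Edg n (arc_bij xs) (arc_bij ys)"
    then obtain l x where z: "z = (l, {x, fnn l (arc_bij xs) (arc_bij ys) x})" "x \<in> {1..n}"
       "fnn l (arc_bij xs) (arc_bij ys) x \<noteq> x" unfolding Edg_def by blast
    show "z \<in> meander_edges xs ys"
    proof (cases l)
      case True
      then have "{x, arc_bij xs x} \<in> comp_edges xs" using z unfolding cx by (auto simp: fnn_def)
      then show ?thesis using z True unfolding meander_edges_def by (simp add: fnn_def)
    next
      case False
      then have "{x, arc_bij ys x} \<in> comp_edges ys" using z unfolding cy by (auto simp: fnn_def)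
      then show ?thesis using z False unfolding meander_edges_def by (simp add: fnn_def)
    qed
  qed
qed


theorem theorem4p5:
  fixes n :: nat and xs ys :: "nat list"
  assumes "n \<ge> 1" and "is_composition n xs" and "is_composition n ys"
  shows "meander_is_path n xs ys \<longleftrightarrow> is_n_cycle n (meander_perm xs ys)"
proof -
  have sx: "sum_list xs = n" using assms(2) by (simp add: is_composition_def)
  have sy: "sum_list ys = n" using assms(3) by (simp add: is_composition_def)
  have E: "meander_edges xs ys = Edg n (arc_bij xs) (arc_bij ys)" by (rule meander_edges_Edg[OF sx sy])
  have path: "meander_is_path n xs ys \<longleftrightarrow> pathE n (Edg n (arc_bij xs) (arc_bij ys))"
    unfolding meander_is_path_def pathE_def E ..
  have perm: "meander_perm xs ys = arc_bij xs \<circ> arc_bij ys" by (simp add: meander_perm_def)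
  have PP: "\<And>x. arc_bij xs (arc_bij xs x) = x" by (rule arc_bij_inv)
  have QQ: "\<And>x. arc_bij ys (arc_bij ys x) = x" by (rule arc_bij_inv)
  have Pin: "\<And>x. x \<in> {1..n} \<Longrightarrow> arc_bij xs x \<in> {1..n}" using arc_bij_in[of _ xs] sx by simp
  have Pout: "\<And>x. x \<notin> {1..n} \<Longrightarrow> arc_bij xs x = x" using arc_bij_out[of _ xs] sx by simp
  have Qout: "\<And>x. x \<notin> {1..n} \<Longrightarrow> arc_bij ys x = x" using arc_bij_out[of _ ys] sy by simp
  show ?thesis unfolding path perm
    using abstract_fwd[OF PP QQ Pin Pout Qout] abstract_bwd[OF PP QQ assms(1) Pin] by blast
qed

end
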